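(* Let $q$ and $d$ be positive integers and let $\mathcal{D}=\{(b_1,B_1),\ldots,(b_d,B_d)\}\subseteq [q]\times 2^{[q]}$ with $|B_i|\ge 2$ for all $i\in[d]$. Then ${\sf Div}(\mathcal{E}_{\mathcal{D}})=\overline{\mathcal{D}}$, where ${\sf Div}(\mathcal{E}_{\mathcal{D}})$ is computed with respect to the generators $\varepsilon_{\mathcal{D},1},\ldots,\varepsilon_{\mathcal{D},q}$ in this order. That is, the divisibility relations satisfied by the generators of $\mathcal{E}_{\mathcal{D}}$ are exactly the relations that can be deduced from $\mathcal{D}$.
   Context: Divisibility relations. Let $\Lambda$ be a finite nonempty set and $U=\{u_i:i\in\Lambda\}$ a set of monomials in a polynomial ring over a field, indexed so that $u_i=u_j$ implies $i=j$. A divisibility relation on $U$ is a pair $(b,B)$ with $b\in\Lambda$ and $\emptyset\ne B\subseteq\Lambda$ such that $u_b\mid \mathrm{lcm}(u_i: i\in B)$; ${\sf Div}(U)$ is the set of all of them. A pair $(b,B)\in\Lambda\times 2^\Lambda$ is trivial if $b\in B$. The extensions of $(b,B)$ are $(b,B)^{\sf ex}=\{(b,C): B\subseteq C\subseteq \Lambda\}$. Define the binary operation $(b,B)\circ(c,C)=(b,(B\smallsetminus\{c\})\cup C)$ on $\Lambda\times 2^\Lambda$ (it is neither commutative nor associative). For $\mathcal{D}\subseteq\Lambda\times 2^\Lambda$: $\mathcal{D}^\circ$ is the set of all compositions $(b_1,B_1)\circ\cdots\circ(b_s,B_s)$ with $s\ge1$, $(b_i,B_i)\in\mathcal{D}$,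 taken with every possible bracketing; $\mathcal{D}^{\sf ex}=\bigcup_{(b,B)\in\mathcal{D}}(b,B)^{\sf ex}$; $\Lambda^{\sf triv}=\{(b,B)\in\Lambda\times 2^\Lambda: b\in B\}$; and $\overline{\mathcal{D}}=(\mathcal{D}^\circ)^{\sf ex}\cup\Lambda^{\sf triv}$. Here $\Lambda=[q]$. $\mathcal{D}$-extremal ideals. Let $\mathsf k$ be a field and $S_{[q]}=\mathsf k[y_A:\emptyset\ne A\subseteq[q]]$. For $\mathcal{D}\subseteq [q]\times(2^{[q]}\smallsetminus\{\emptyset\})$ let $Q(\mathcal{D})=\{A\subseteq[q]: A\ne\emptyset,\ A\cap B\ne\emptyset \text{ for all }(b,B)\in\mathcal{D}\text{ with } b\in A\}$, let $\varepsilon_{\mathcal{D},i}=\prod_{A\in Q(\mathcal{D}),\, i\in A} y_A$ for $i\in[q]$, and let $\mathcal{E}_{\mathcal{D}}=(\varepsilon_{\mathcal{D},1},\ldots,\varepsilon_{\mathcal{D},q})\subseteq S_{[q]}$. ${\sf Div}(\mathcal{E}_{\mathcal{D}})$ denotes ${\sf Div}(\{\varepsilon_{\mathcal{D},1},\ldots,\varepsilon_{\mathcal{D},q}\})$ with indexing set $[q]$. *)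

theory Defs
  imports Main
begin

text \<open>Monomials are represented by their exponent vectors: a monomial in variables
of type 'v is a function 'v \<Rightarrow> nat (with finite support).\<close>

type_synonym 'v monomial = "'v \<Rightarrow> nat"

definition mono_dvd :: "'v monomial \<Rightarrow> 'v monomial \<Rightarrow> bool" where
  "mono_dvd u w \<longleftrightarrow> (\<forall>v. u v \<le> w v)"

definition mono_lcm :: "('i \<Rightarrow> 'v monomial) \<Rightarrow> 'i set \<Rightarrow> 'v monomial" where
  "mono_lcm u B = (\<lambda>v. Max ((\<lambda>i. u i v) ` B))"

definition Div :: "'i set \<Rightarrow> ('i \<Rightarrow> 'v monomial) \<Rightarrow> ('i \<times> 'i set) set" where
  "Div \<Lambda> u = {(b, B). b \<in> \<Lambda> \<and> B \<noteq> {} \<and> B \<subseteq> \<Lambda> \<and> mono_dvd (u b) (mono_lcm u B)}"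

definition comp_rel :: "'i \<times> 'i set \<Rightarrow> 'i \<times> 'i set \<Rightarrow> 'i \<times> 'i set" (infixl "\<circ>\<^sub>r" 70) where
  "comp_rel x y = (fst x, (snd x - {fst y}) \<union> snd y)"

inductive_set comp_closure :: "('i \<times> 'i set) set \<Rightarrow> ('i \<times> 'i set) set" for D where
  base: "x \<in> D \<Longrightarrow> x \<in> comp_closure D"
| comp: "x \<in> comp_closure D \<Longrightarrow> y \<in> comp_closure D \<Longrightarrow> comp_rel x y \<in> comp_closure D"

definition ext_rel :: "'i set \<Rightarrow> ('i \<times> 'i set) set \<Rightarrow> ('i \<times> 'i set) set" where
  "ext_rel \<Lambda> D = {(b, C). \<exists>B. (b, B) \<in> D \<and> B \<subseteq> C \<and> C \<subseteq> \<Lambda>}"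

definition triv_rel :: "'i set \<Rightarrow> ('i \<times> 'i set) set" where
  "triv_rel \<Lambda> = {(b, B). b \<in> \<Lambda> \<and> B \<subseteq> \<Lambda> \<and> b \<in> B}"

definition rel_closure :: "'i set \<Rightarrow> ('i \<times> 'i set) set \<Rightarrow> ('i \<times> 'i set) set" where
  "rel_closure \<Lambda> D = ext_rel \<Lambda> (comp_closure D) \<union> triv_rel \<Lambda>"

text \<open>D-extremal ideals. Variables y_A are indexed by sets A (nonempty subsets of [q]).\<close>
definition QD :: "nat \<Rightarrow> (nat \<times> nat set) set \<Rightarrow> nat set set" where
  "QD q D = {A. A \<noteq> {} \<and> A \<subseteq> {1..q} \<and> (\<forall>(b, B) \<in> D. b \<in> A \<longrightarrow> A \<inter> B \<noteq> {})}"

definition eps :: "nat \<Rightarrow> (nat \<times> nat set) set \<Rightarrow> nat \<Rightarrow> nat set monomial" where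
  "eps q D i = (\<lambda>A. if A \<in> QD q D \<and> i \<in> A then 1 else 0)"

end

theory Submission
  imports Defs
begin

definition valid :: "nat \<Rightarrow> (nat \<times> nat set) set \<Rightarrow> nat \<times> nat set \<Rightarrow> bool" where
  "valid q D x \<longleftrightarrow> (\<forall>A\<in>QD q D. fst x \<in> A \<longrightarrow> A \<inter> snd x \<noteq> {})"

lemma max_ge1: "finite B \<Longrightarrow> B \<noteq> {} \<Longrightarrow> (1::nat) \<le> Max (f ` B) \<longleftrightarrow> (\<exists>i\<in>B. 1 \<le> f i)"
  by (simp add: Max_ge_iff)

lemma div_iff:
  assumes "finite B" "B \<noteq> {}"
  shows "mono_dvd (eps q D b) (mono_lcm (eps q D) B) \<longleftrightarrow> valid q D (b, B)"
proof -
  have "eps q D b A \<le> Max ((\<lambda>i. eps q D i A) ` B) \<longleftrightarrow> (A \<in> QD q D \<longrightarrow> b \<in> A \<longrightarrow> A \<inter> B \<noteq> {})" for A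
  proof (cases "A \<in> QD q D \<and> b \<in> A")
    case True
    then have e: "eps q D b A = 1" by (simp add: eps_def)
    have "(1::nat) \<le> Max ((\<lambda>i. eps q D i A) ` B) \<longleftrightarrow> (\<exists>i\<in>B. 1 \<le> eps q D i A)"
      using max_ge1[OF assms] .
    also have "\<dots> \<longleftrightarrow> A \<inter> B \<noteq> {}" using True by (auto simp: eps_def)
    finally show ?thesis using e True by simp
  next
    case False
    then have "eps q D b A = 0" by (simp add: eps_def)
    then show ?thesis using False by simp
  qed
  then show ?thesis unfolding mono_dvd_def mono_lcm_def valid_def by auto
qed

lemma cc_valid:
  assumes "x \<in> comp_closure D"
  shows "valid q D x"
  using assms
proof induction
  case (base x)
  then show ?case by (auto simp: valid_def QD_def)
next
  case (comp x y)
  then show ?case unfolding valid_def comp_rel_def by fastforce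
qed

lemma cc_props:
  assumes "x \<in> comp_closure D" "D \<subseteq> {1..q} \<times> Pow {1..q}" "\<forall>(b, B) \<in> D. card B \<ge> 2"
  shows "fst x \<in> {1..q} \<and> snd x \<subseteq> {1..q} \<and> snd x \<noteq> {}"
  using assms(1)
proof induction
  case (base x)
  then show ?case using assms(2,3) by (cases x) fastforce
next
  case (comp x y)
  then show ?case by (auto simp: comp_rel_def)
qed

lemma compose_many:
  assumes "finite S" "(b1, B1) \<in> comp_closure D"
    "\<forall>c\<in>S. \<exists>C\<subseteq>B. (c, C) \<in> comp_closure D"
  shows "\<exists>B''. (b1, B'') \<in> comp_closure D \<and> B'' \<subseteq> (B1 - S) \<union> B"
  using assms
proof (induction S rule: finite_induct)
  case empty
  then show ?case by auto
next
  case (insert c S)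
  then obtain B'' where h: "(b1, B'') \<in> comp_closure D" "B'' \<subseteq> (B1 - S) \<union> B" by auto
  obtain C where c: "C \<subseteq> B" "(c, C) \<in> comp_closure D" using insert by auto
  have "comp_rel (b1, B'') (c, C) \<in> comp_closure D" by (rule comp_closure.comp[OF h(1) c(2)])
  moreover have "comp_rel (b1, B'') (c, C) = (b1, (B'' - {c}) \<union> C)" by (simp add: comp_rel_def)
  ultimately show ?case using h c by (intro exI[of _ "(B'' - {c}) \<union> C"]) auto
qed

theorem theorem3p4:
  fixes q :: nat and D :: "(nat \<times> nat set) set"
  assumes "q > 0"
    and "finite D" and "D \<noteq> {}"
    and "D \<subseteq> {1..q} \<times> Pow {1..q}"
    and "\<forall>(b, B) \<in> D. card B \<ge> 2"
  shows "Div {1..q} (eps q D) = rel_closure {1..q} D"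
proof
  show "rel_closure {1..q} D \<subseteq> Div {1..q} (eps q D)"
  proof
    fix x assume "x \<in> rel_closure {1..q} D"
    then obtain b C where x: "x = (b, C)" and
      cases: "(\<exists>B. (b, B) \<in> comp_closure D \<and> B \<subseteq> C \<and> C \<subseteq> {1..q}) \<or> (b \<in> {1..q} \<and> C \<subseteq> {1..q} \<and> b \<in> C)"
      unfolding rel_closure_def ext_rel_def triv_rel_def by auto
    have fin: "finite C" using cases finite_subset by blast
    from cases have "b \<in> {1..q} \<and> C \<subseteq> {1..q} \<and> C \<noteq> {} \<and> valid q D (b, C)"
    proof
      assume "\<exists>B. (b, B) \<in> comp_closure D \<and> B \<subseteq> C \<and> C \<subseteq> {1..q}"
      then obtain B where B: "(b, B) \<in> comp_closure D" "B \<subseteq> C" "C \<subseteq> {1..q}" by auto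
      have vB: "valid q D (b, B)" using cc_valid[OF B(1)] .
      have p: "b \<in> {1..q}" "B \<noteq> {}" using cc_props[OF B(1) assms(4,5)] by auto
      have "valid q D (b, C)" using vB B(2) unfolding valid_def by (simp, blast)
      then show ?thesis using p B by blast
    next
      assume "b \<in> {1..q} \<and> C \<subseteq> {1..q} \<and> b \<in> C"
      then show ?thesis unfolding valid_def by auto
    qed
    then show "x \<in> Div {1..q} (eps q D)" using div_iff[OF fin] x unfolding Div_def by auto
  qed
next
  show "Div {1..q} (eps q D) \<subseteq> rel_closure {1..q} D"
  proof
    fix x assume "x \<in> Div {1..q} (eps q D)"
    then obtain b B where x: "x = (b, B)" and b: "b \<in> {1..q}" and Bne: "B \<noteq> {}"
      and Bq: "B \<subseteq> {1..q}" and dv: "mono_dvd (eps q D b) (mono_lcm (eps q D) B)"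
      unfolding Div_def by auto
    have finB: "finite B" using Bq finite_subset by blast
    have val: "valid q D (b, B)" using div_iff[OF finB Bne] dv by simp
    show "x \<in> rel_closure {1..q} D"
    proof (cases "b \<in> B")
      case True
      then show ?thesis using x b Bq unfolding rel_closure_def triv_rel_def by auto
    next
      case False
      define X where "X = B \<union> {c. \<exists>C\<subseteq>B. (c, C) \<in> comp_closure D}"
      have "b \<in> X"
      proof (rule ccontr)
        assume nb: "b \<notin> X"
        define A where "A = {1..q} - X"
        have "A \<noteq> {}" "A \<subseteq> {1..q}" "b \<in> A" using nb b by (auto simp: A_def)
        moreover have "A \<inter> B = {}" by (auto simp: A_def X_def)
        ultimately have "A \<notin> QD q D" using val unfolding valid_def by auto
        then obtain b1 B1 where d: "(b1, B1) \<in> D" "b1 \<in> A" "A \<inter> B1 = {}"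
          using \<open>A \<noteq> {}\<close> \<open>A \<subseteq> {1..q}\<close> unfolding QD_def by auto
        have "(b1, B1) \<in> {1..q} \<times> Pow {1..q}" using d(1) assms(4) by blast
        hence B1q: "B1 \<subseteq> {1..q}" by simp
        hence B1X: "B1 \<subseteq> X" using d(3) by (auto simp: A_def)
        have f1: "finite (B1 - B)" using B1q finite_subset by blast
        have f2: "(b1, B1) \<in> comp_closure D" using d(1) by (rule comp_closure.base)
        have f3: "\<forall>c\<in>B1 - B. \<exists>C\<subseteq>B. (c, C) \<in> comp_closure D"
          using B1X by (auto simp: X_def)
        obtain B'' where g: "(b1, B'') \<in> comp_closure D" "B'' \<subseteq> (B1 - (B1 - B)) \<union> B"
          using compose_many[OF f1 f2 f3] by blast
        have "B'' \<subseteq> B" using g(2) by blast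
        hence "b1 \<in> X" unfolding X_def using g(1) by blast
        thus False using d(2) by (auto simp: A_def)
      qed
      then obtain C where C: "C \<subseteq> B" "(b, C) \<in> comp_closure D" using False unfolding X_def by blast
      have "(b, B) \<in> ext_rel {1..q} (comp_closure D)" unfolding ext_rel_def using C Bq by blast
      then show ?thesis using x unfolding rel_closure_def by blast
    qed
  qed
qed

end
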